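(* Let $(q_i)_{i\in\mathbb Z}$ be complex numbers, $T=(T_{ij})_{i,j\ge0}$ the infinite Toeplitz matrix with $T_{ij}=q_{i-j}$, and $T(w)=\sum_{i\in\mathbb Z}q_iw^i$ its symbol. Assume $T(w)$ converges absolutely on the annulus $\{1<|w|<1+\varepsilon\}$ for some $\varepsilon>0$. Then, as formal power series in $1/z$, $$(z-T)^{-1}_{00}:=\sum_{k\ge0}\frac{(T^k)_{00}}{z^{k+1}}=\exp\left(-\frac1{2\pi\mathrm i}\oint_{|w|=1+\varepsilon/2}\ln\big(z-T(w)\big)\frac{dw}w\right),$$ where $\ln(z-T(w))=\ln z-\sum_{k\ge1}\frac{T(w)^k}{kz^k}$. *)

theory Defs
  imports "HOL-Complex_Analysis.Complex_Analysis" "HOL-Computational_Algebra.Formal_Power_Series"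
begin

definition toeplitz :: "(int \<Rightarrow> complex) \<Rightarrow> nat \<Rightarrow> nat \<Rightarrow> complex" where
  "toeplitz q i j = q (int i - int j)"

fun toeplitz_pow :: "(int \<Rightarrow> complex) \<Rightarrow> nat \<Rightarrow> nat \<Rightarrow> nat \<Rightarrow> complex" where
  "toeplitz_pow q 0 i j = (if i = j then 1 else 0)"
| "toeplitz_pow q (Suc k) i j = (\<Sum>\<^sub>\<infinity>l. toeplitz q i l * toeplitz_pow q k l j)"

definition symbol :: "(int \<Rightarrow> complex) \<Rightarrow> complex \<Rightarrow> complex" where
  "symbol q w = (\<Sum>\<^sub>\<infinity>i. q i * power_int w i)"

text \<open>With x = 1/z: ln z - ln(z - T(w)) = sum over k >= 1 of T(w)^k x^k / k, as a formal power series in x.\<close>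
definition log_part :: "(int \<Rightarrow> complex) \<Rightarrow> complex \<Rightarrow> complex fps" where
  "log_part q w = Abs_fps (\<lambda>n. if n = 0 then 0 else symbol q w ^ n / of_nat n)"

definition fps_circle_avg :: "real \<Rightarrow> (complex \<Rightarrow> complex fps) \<Rightarrow> complex fps" where
  "fps_circle_avg r F = Abs_fps (\<lambda>n. contour_integral (circlepath 0 r) (\<lambda>w. fps_nth (F w) n / w) / (2 * pi * \<i>))"

end

theory Submission
  imports Defs
begin


lemma prod_abs_summable:
  fixes f :: "'a \<Rightarrow> complex" and g :: "'b \<Rightarrow> complex"
  assumes f: "(\<lambda>x. norm (f x)) summable_on A" and g: "(\<lambda>x. norm (g x)) summable_on B"
  shows "(\<lambda>p. norm ((\<lambda>(x,y). f x * g y) p)) summable_on (A \<times> B)"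
    and "(\<Sum>\<^sub>\<infinity>(x,y)\<in>A \<times> B. f x * g y) = infsum f A * infsum g B"
proof -
  have 1: "(\<lambda>p. norm ((\<lambda>(x,y). f x * g y) p)) summable_on Sigma A (\<lambda>_. B)"
    unfolding Infinite_Sum.abs_summable_on_Sigma_iff[where f="\<lambda>(x,y). f x * g y"]
  proof (intro conjI ballI)
    fix x assume "x \<in> A"
    show "(\<lambda>y. norm (case (x, y) of (x, y) \<Rightarrow> f x * g y)) summable_on B"
      using summable_on_cmult_right[OF g, of "norm (f x)"] by (simp add: norm_mult)
  next
    have eq: "\<And>x. (\<Sum>\<^sub>\<infinity>y\<in>B. norm (case (x, y) of (x, y) \<Rightarrow> f x * g y))
        = norm (f x) * (\<Sum>\<^sub>\<infinity>y\<in>B. norm (g y))"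
      by (simp add: norm_mult infsum_cmult_right')
    have "(\<lambda>x. norm (norm (f x) * (\<Sum>\<^sub>\<infinity>y\<in>B. norm (g y)))) summable_on A"
      using summable_on_cmult_left[OF f, of "(\<Sum>\<^sub>\<infinity>y\<in>B. norm (g y))"]
      by (simp add: norm_mult infsum_nonneg)
    then show "(\<lambda>x. norm (\<Sum>\<^sub>\<infinity>y\<in>B. norm (case (x, y) of (x, y) \<Rightarrow> f x * g y))) summable_on A"
      by (simp only: eq)
  qed
  then show "(\<lambda>p. norm ((\<lambda>(x,y). f x * g y) p)) summable_on (A \<times> B)" by simp
  have s: "(\<lambda>(x,y). f x * g y) summable_on (A \<times> B)"
    using 1 abs_summable_summable by blast
  have "(\<Sum>\<^sub>\<infinity>(x,y)\<in>A \<times> B. f x * g y) = (\<Sum>\<^sub>\<infinity>x\<in>A. \<Sum>\<^sub>\<infinity>y\<in>B. f x * g y)"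
    using infsum_Sigma'_banach[of "\<lambda>x y. f x * g y" A "\<lambda>_. B"] s by simp
  also have "\<dots> = (\<Sum>\<^sub>\<infinity>x\<in>A. f x * infsum g B)"
    by (simp add: infsum_cmult_right')
  also have "\<dots> = infsum f A * infsum g B"
    by (simp add: infsum_cmult_left')
  finally show "(\<Sum>\<^sub>\<infinity>(x,y)\<in>A \<times> B. f x * g y) = infsum f A * infsum g B" .
qed

lemma lists_Suc_eq: "{d::'a list. length d = Suc k} = (\<lambda>(x,d). x # d) ` (UNIV \<times> {d. length d = k})"
  by (auto simp: image_def length_Suc_conv)

lemma lists_prod_abs_summable:
  fixes f :: "'a \<Rightarrow> complex"
  assumes f: "(\<lambda>x. norm (f x)) summable_on UNIV"
  shows "(\<lambda>d. norm (prod_list (map f d))) summable_on {d. length d = k}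
       \<and> (\<Sum>\<^sub>\<infinity>d\<in>{d. length d = k}. prod_list (map f d)) = (infsum f UNIV) ^ k"
proof (induction k)
  case 0
  have "{d::'a list. length d = 0} = {[]}" by auto
  then show ?case by simp
next
  case (Suc k)
  have inj: "inj_on (\<lambda>(x,d). x # d) (UNIV \<times> {d::'a list. length d = k})"
    by (auto simp: inj_on_def)
  have e: "(\<lambda>d. prod_list (map f d)) \<circ> (\<lambda>(x,d). x # d) = (\<lambda>(x,d). f x * prod_list (map f d))"
    by auto
  have e2: "(\<lambda>d. norm (prod_list (map f d))) \<circ> (\<lambda>(x,d). x # d) = (\<lambda>p. norm ((\<lambda>(x,d). f x * prod_list (map f d)) p))"
    by auto
  from prod_abs_summable[OF f Suc.IH[THEN conjunct1]]
  have A: "(\<lambda>p. norm ((\<lambda>(x, y). f x * prod_list (map f y)) p)) summable_on UNIV \<times> {d. length d = k}"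
    and B: "(\<Sum>\<^sub>\<infinity>(x, y)\<in>UNIV \<times> {d. length d = k}. f x * prod_list (map f y)) =
       infsum f UNIV * (\<Sum>\<^sub>\<infinity>d\<in>{d. length d = k}. prod_list (map f d))" by auto
  show ?case
    unfolding lists_Suc_eq
    apply (subst summable_on_reindex[OF inj])
    apply (subst infsum_reindex[OF inj])
    using A B Suc.IH by (simp add: e e2)
qed



definition W :: "(int \<Rightarrow> complex) \<Rightarrow> int list \<Rightarrow> complex" where
  "W q d = prod_list (map q d)"

lemma W_Nil[simp]: "W q [] = 1" and W_Cons[simp]: "W q (x # xs) = q x * W q xs"
  and W_append[simp]: "W q (xs @ ys) = W q xs * W q ys"
  by (simp_all add: W_def)

lemma prod_list_power_int:
  fixes w :: complex
  assumes "w \<noteq> 0"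
  shows "prod_list (map (\<lambda>i. q i * power_int w i) d) = W q d * power_int w (sum_list d)"
  by (induction d) (auto simp: power_int_add assms)

lemma W_summable_fixed_sum:
  fixes w :: complex
  assumes w: "w \<noteq> 0" and hq: "(\<lambda>i. norm (q i * power_int w i)) summable_on UNIV"
    and S: "S \<subseteq> {d. length d = k \<and> sum_list d = s}"
  shows "(\<lambda>d. norm (W q d)) summable_on S"
proof -
  have "(\<lambda>d. norm (prod_list (map (\<lambda>i. q i * power_int w i) d))) summable_on {d. length d = k}"
    using lists_prod_abs_summable[OF hq] by blast
  then have "(\<lambda>d. norm (prod_list (map (\<lambda>i. q i * power_int w i) d))) summable_on S"
    by (rule summable_on_subset_banach) (use S in auto)
  then have "(\<lambda>d. norm (prod_list (map (\<lambda>i. q i * power_int w i) d)) * norm (power_int w (- s))) summable_on S"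
    by (rule summable_on_cmult_left)
  moreover have "norm (prod_list (map (\<lambda>i. q i * power_int w i) d)) * norm (power_int w (- s)) = norm (W q d)"
    if "d \<in> S" for d
  proof -
    have "sum_list d = s" using S that by auto
    then show ?thesis
      using w by (simp add: prod_list_power_int norm_mult mult.assoc flip: norm_mult power_int_add)
  qed
  ultimately show ?thesis
    by (rule summable_on_cong[THEN iffD1, rotated]) 
qed

definition paths :: "nat \<Rightarrow> nat \<Rightarrow> nat \<Rightarrow> int list set" where
  "paths k i j = {d. length d = k \<and> int i - sum_list d = int j \<and> (\<forall>t. sum_list (take t d) \<le> int i)}"

lemma W_summable_paths:
  fixes w :: complex
  assumes w: "w \<noteq> 0" and hq: "(\<lambda>i. norm (q i * power_int w i)) summable_on UNIV"
  shows "W q summable_on paths k i j"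
proof -
  have "(\<lambda>d. norm (W q d)) summable_on paths k i j"
    by (rule W_summable_fixed_sum[OF w hq, of _ k "int i - int j"]) (auto simp: paths_def)
  then show ?thesis by (rule abs_summable_summable)
qed

lemma paths_0: "paths 0 i j = (if i = j then {[]} else {})"
  by (auto simp: paths_def)

lemma toeplitz_pow_paths:
  fixes w :: complex
  assumes w: "w \<noteq> 0" and hq: "(\<lambda>i. norm (q i * power_int w i)) summable_on UNIV"
  shows "toeplitz_pow q k i j = infsum (W q) (paths k i j)"
proof (induction k arbitrary: i)
  case 0
  then show ?case by (simp add: paths_0)
next
  case (Suc k)
  define S where "S = Sigma (UNIV::nat set) (\<lambda>l. paths k l j)"
  define fw where "fw = (\<lambda>(l::nat,d). (int i - int l) # d)"
  define bw where "bw = (\<lambda>d::int list. (nat (int i - hd d), tl d))"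
  have 1: "bw (fw a) = a" if "a \<in> S" for a
    using that by (auto simp: S_def fw_def bw_def)
  have 2: "fw a \<in> paths (Suc k) i j" if aS: "a \<in> S" for a
  proof -
    obtain l d where a: "a = (l,d)" and d: "d \<in> paths k l j" using aS unfolding S_def by auto
    have "sum_list (take t ((int i - int l) # d)) \<le> int i" for t
      using d by (cases t) (auto simp: paths_def)
    then show ?thesis using d by (auto simp: a fw_def paths_def)
  qed
  have 3: "fw (bw b) = b" "bw b \<in> S" if bT: "b \<in> paths (Suc k) i j" for b
  proof -
    obtain x d where b: "b = x # d" using bT by (cases b) (auto simp: paths_def)
    have "sum_list (take 1 b) \<le> int i" using bT by (auto simp: paths_def)
    then have xi: "x \<le> int i" by (simp add: b)
    show "fw (bw b) = b" using xi by (simp add: b fw_def bw_def)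
    have "sum_list (take t d) \<le> int i - x" for t
      using bT[unfolded paths_def, simplified] b
      by (metis add.commute le_diff_eq sum_list.Cons take_Suc_Cons)
    then show "bw b \<in> S" using bT xi by (auto simp: b bw_def S_def paths_def)
  qed
  have 5: "W q (fw a) = (\<lambda>(l,d). q (int i - int l) * W q d) a" for a
    by (auto simp: fw_def split: prod.splits)
  have sT: "W q summable_on paths (Suc k) i j" by (rule W_summable_paths[OF w hq])
  have sS: "(\<lambda>(l,d). q (int i - int l) * W q d) summable_on S"
    using summable_on_reindex_bij_witness[of S bw fw "paths (Suc k) i j" "W q"
        "\<lambda>(l,d). q (int i - int l) * W q d"] 1 2 3 5 sT by auto
  have "toeplitz_pow q (Suc k) i j = (\<Sum>\<^sub>\<infinity>l. q (int i - int l) * infsum (W q) (paths k l j))"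
    by (simp add: Suc.IH toeplitz_def)
  also have "\<dots> = (\<Sum>\<^sub>\<infinity>l. \<Sum>\<^sub>\<infinity>d\<in>paths k l j. q (int i - int l) * W q d)"
    by (simp add: infsum_cmult_right')
  also have "\<dots> = (\<Sum>\<^sub>\<infinity>(l,d)\<in>S. q (int i - int l) * W q d)"
    using infsum_Sigma'_banach[of "\<lambda>l d. q (int i - int l) * W q d" UNIV "\<lambda>l. paths k l j"] sS
    by (simp add: S_def)
  also have "\<dots> = infsum (W q) (paths (Suc k) i j)"
    using infsum_reindex_bij_witness[of S bw fw "paths (Suc k) i j" "W q"
        "\<lambda>(l,d). q (int i - int l) * W q d"] 1 2 3 5 by auto
  finally show ?case .
qed



abbreviation ps :: "int list \<Rightarrow> nat \<Rightarrow> int" where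
  "ps d j \<equiv> sum_list (take j d)"

lemma ps_append: "ps (xs @ ys) j = ps xs j + ps ys (j - length xs)"
  by simp

lemma ps_drop: "ps (drop a e) k = ps e (a + k) - ps e a"
  by (simp add: take_add)

lemma ps_take: "ps (take a e) j = ps e (min j a)"
  by (simp add: min.commute)

lemma ps_ge_length: "length e \<le> j \<Longrightarrow> ps e j = sum_list e"
  by simp

definition exc :: "nat \<Rightarrow> int list set" where
  "exc n = {d. length d = n \<and> sum_list d = 0 \<and> (\<forall>t. ps d t \<le> 0)}"

definition br :: "nat \<Rightarrow> int list set" where
  "br n = {d. length d = n \<and> sum_list d = 0}"

lemma paths_00: "paths n 0 0 = exc n"
  by (auto simp: paths_def exc_def)

definition lastz :: "int list \<Rightarrow> nat \<Rightarrow> nat" where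
  "lastz e t = Max {j. j \<le> t \<and> ps e j = 0}"

lemma lastz:
  shows "lastz e t \<le> t" "ps e (lastz e t) = 0"
    "\<And>j. lastz e t < j \<Longrightarrow> j \<le> t \<Longrightarrow> ps e j \<noteq> 0"
proof -
  let ?A = "{j. j \<le> t \<and> ps e j = 0}"
  have fin: "finite ?A" by (rule finite_subset[of _ "{..t}"]) auto
  have ne: "0 \<in> ?A" by simp
  have "lastz e t \<in> ?A" unfolding lastz_def using fin ne by (intro Max_in) auto
  then show "lastz e t \<le> t" "ps e (lastz e t) = 0" by auto
  fix j assume "lastz e t < j" "j \<le> t"
  show "ps e j \<noteq> 0"
  proof
    assume "ps e j = 0"
    then have "j \<in> ?A" using \<open>j \<le> t\<close> by simp
    then have "j \<le> lastz e t" unfolding lastz_def using fin by (rule Max_ge[rotated])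
    with \<open>lastz e t < j\<close> show False by simp
  qed
qed

lemma lastz_eqI:
  assumes "a \<le> t" "ps e a = 0" "\<And>j. a < j \<Longrightarrow> j \<le> t \<Longrightarrow> ps e j \<noteq> 0"
  shows "lastz e t = a"
  unfolding lastz_def
proof (rule Max_eqI)
  show "finite {j. j \<le> t \<and> ps e j = 0}" by (rule finite_subset[of _ "{..t}"]) auto
  show "a \<in> {j. j \<le> t \<and> ps e j = 0}" using assms by auto
  fix y assume "y \<in> {j. j \<le> t \<and> ps e j = 0}"
  then show "y \<le> a" using assms(3)[of y] by force
qed

definition lastmax :: "int list \<Rightarrow> nat" where
  "lastmax b = Max {j. 1 \<le> j \<and> j \<le> length b \<and> (\<forall>i. ps b i \<le> ps b j)}"

lemma lastmax:
  assumes "b \<noteq> []" "sum_list b = 0"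
  shows "1 \<le> lastmax b" "lastmax b \<le> length b" "\<And>i. ps b i \<le> ps b (lastmax b)"
    "\<And>i. lastmax b < i \<Longrightarrow> i \<le> length b \<Longrightarrow> ps b i < ps b (lastmax b)"
proof -
  let ?A = "{j. 1 \<le> j \<and> j \<le> length b \<and> (\<forall>i. ps b i \<le> ps b j)}"
  let ?m = "length b"
  have fin: "finite ?A" by (rule finite_subset[of _ "{..?m}"]) auto
  define M where "M = Max ((\<lambda>j. ps b j) ` {0..?m})"
  have "M \<in> (\<lambda>j. ps b j) ` {0..?m}" unfolding M_def by (intro Max_in) auto
  then obtain j0 where j0: "j0 \<le> ?m" "ps b j0 = M" by auto
  have allM: "ps b i \<le> M" for i
  proof (cases "i \<le> ?m")
    case True then show ?thesis unfolding M_def by (intro Max_ge) auto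
  next
    case False
    then have "ps b i = ps b ?m" by simp
    also have "\<dots> \<le> M" unfolding M_def by (rule Max_ge) (simp, rule image_eqI[where x="length b"], simp_all)
    finally show ?thesis .
  qed
  have "?A \<noteq> {}"
  proof (cases "j0 = 0")
    case True
    then have "M = 0" using j0 by simp
    then have "?m \<in> ?A" using allM assms by (auto simp: Suc_le_eq)
    then show ?thesis by auto
  next
    case False
    then have "j0 \<in> ?A" using allM j0 by auto
    then show ?thesis by auto
  qed
  then have "lastmax b \<in> ?A" unfolding lastmax_def using fin by (intro Max_in) auto
  then show "1 \<le> lastmax b" "lastmax b \<le> length b" "\<And>i. ps b i \<le> ps b (lastmax b)" by auto
  fix i assume i: "lastmax b < i" "i \<le> length b"
  show "ps b i < ps b (lastmax b)"
  proof (rule ccontr)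
    assume "\<not> ps b i < ps b (lastmax b)"
    then have le: "ps b (lastmax b) \<le> ps b i" by simp
    have "\<forall>k. ps b k \<le> ps b i"
    proof
      fix k show "ps b k \<le> ps b i" using \<open>lastmax b \<in> ?A\<close> le by (smt (verit) mem_Collect_eq)
    qed
    then have "i \<in> ?A" using i by simp
    then have "i \<le> lastmax b" unfolding lastmax_def using fin by (rule Max_ge[rotated])
    then show False using i by simp
  qed
qed

lemma lastmax_eqI:
  assumes "1 \<le> c" "c \<le> length b" "\<And>i. ps b i \<le> ps b c"
    "\<And>i. c < i \<Longrightarrow> i \<le> length b \<Longrightarrow> ps b i < ps b c"
  shows "lastmax b = c"
  unfolding lastmax_def
proof (rule Max_eqI)
  show "finite {j. 1 \<le> j \<and> j \<le> length b \<and> (\<forall>i. ps b i \<le> ps b j)}"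
    by (rule finite_subset[of _ "{..length b}"]) auto
  show "c \<in> {j. 1 \<le> j \<and> j \<le> length b \<and> (\<forall>i. ps b i \<le> ps b j)}" using assms by auto
  fix y assume "y \<in> {j. 1 \<le> j \<and> j \<le> length b \<and> (\<forall>i. ps b i \<le> ps b j)}"
  then have "ps b c \<le> ps b y" "y \<le> length b" by auto
  show "y \<le> c"
  proof (rule ccontr)
    assume "\<not> y \<le> c"
    then have "ps b y < ps b c" using assms(4)[of y] \<open>y \<le> length b\<close> by simp
    with \<open>ps b c \<le> ps b y\<close> show False by simp
  qed
qed



definition phi :: "nat \<Rightarrow> int list \<times> nat \<Rightarrow> nat \<times> (int list \<times> int list)" where
  "phi n = (\<lambda>(e,t). (n - lastz e t, (drop t e @ take (t - lastz e t) (drop (lastz e t) e), take (lastz e t) e)))"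

definition psi :: "nat \<Rightarrow> nat \<times> (int list \<times> int list) \<Rightarrow> int list \<times> nat" where
  "psi n = (\<lambda>(m,(b,e')). (e' @ drop (lastmax b) b @ take (lastmax b) b, (n - m) + (m - lastmax b)))"

definition TT :: "nat \<Rightarrow> (nat \<times> (int list \<times> int list)) set" where
  "TT n = Sigma {1..n} (\<lambda>m. br m \<times> exc (n - m))"

lemma fwd:
  assumes e: "e \<in> exc n" and t: "t < n"
  shows "phi n (e,t) \<in> TT n" "psi n (phi n (e,t)) = (e,t)"
    "(\<lambda>(m,(b,e')). W q b * W q e') (phi n (e,t)) = W q e"
proof -
  define a where "a = lastz e t"
  have le: "length e = n" and se: "sum_list e = 0" and pe: "\<And>j. ps e j \<le> 0"
    using e by (auto simp: exc_def)
  have at: "a \<le> t" and pa: "ps e a = 0" and pneg: "\<And>j. a < j \<Longrightarrow> j \<le> t \<Longrightarrow> ps e j < 0"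
    using lastz[of e t] pe unfolding a_def by (auto simp: order.order_iff_strict)
  define x where "x = drop t e"
  define y where "y = take (t - a) (drop a e)"
  have lx: "length x = n - t" and ly: "length y = t - a"
    using le t at by (auto simp: x_def y_def)
  have psx: "ps x i = ps e (t + i) - ps e t" for i
    unfolding x_def by (rule ps_drop)
  have psy: "ps y k = ps e (a + min k (t - a))" for k
    unfolding y_def by (simp only: ps_take ps_drop pa diff_zero)
  have sx: "sum_list x = - ps e t"
    using psx[of n] le t lx by (simp add: se)
  have sy: "sum_list y = ps e t"
    using psy[of "t - a"] ly at by simp
  define b where "b = x @ y"
  have lb: "length b = n - a" using lx ly at t by (simp add: b_def)
  have sb: "sum_list b = 0" using sx sy by (simp add: b_def)
  have psb: "ps b i = ps e (t + i) - ps e t + ps e (a + min (i - (n - t)) (t - a))" for i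
    unfolding b_def ps_append psx psy lx by simp
  have c2: "ps b i \<le> ps b (n - t)" for i
  proof -
    have "ps b (n - t) = - ps e t" using psb[of "n - t"] le t pa by (simp add: se)
    then show ?thesis using psb[of i] pe[of "t + i"] pe[of "a + min (i - (n - t)) (t - a)"] by simp
  qed
  have c3: "ps b i < ps b (n - t)" if "n - t < i" "i \<le> length b" for i
  proof -
    have "ps b (n - t) = - ps e t" using psb[of "n - t"] le t pa by (simp add: se)
    moreover have "ps e (t + i) = 0" using that le by (simp add: se)
    moreover have "ps e (a + min (i - (n - t)) (t - a)) < 0"
      using that lb at t by (intro pneg) auto
    ultimately show ?thesis using psb[of i] by simp
  qed
  have c: "lastmax b = n - t"
    by (rule lastmax_eqI) (use t at lb c2 c3 in auto)
  have e': "take a e \<in> exc a"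
  proof -
    have "ps (take a e) j \<le> 0" for j using pe by (simp only: ps_take)
    then show ?thesis using at t le pa by (auto simp: exc_def)
  qed
  have br: "b \<in> br (n - a)" using lb sb by (simp add: br_def)
  have pe_eq: "phi n (e,t) = (n - a, (b, take a e))"
    by (simp add: phi_def a_def b_def x_def y_def)
  show "phi n (e,t) \<in> TT n"
    unfolding pe_eq TT_def using br e' at t by auto
  have split: "take a e @ y @ x = e"
  proof -
    have "y @ x = drop a e" unfolding x_def y_def using at
      by (metis append_take_drop_id drop_drop le_add_diff_inverse2)
    then show ?thesis by simp
  qed
  show "psi n (phi n (e,t)) = (e,t)"
    unfolding pe_eq psi_def using c lx split at t by (simp add: b_def)
  show "(\<lambda>(m,(b,e')). W q b * W q e') (phi n (e,t)) = W q e"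
    unfolding pe_eq using split
    by (metis (no_types, lifting) W_append b_def mult.commute mult.left_commute case_prod_conv)
qed

lemma bwd:
  assumes p: "p \<in> TT n"
  shows "psi n p \<in> exc n \<times> {..<n}" "phi n (psi n p) = p"
proof -
  obtain m b e' where pe: "p = (m, (b, e'))" by (cases p) auto
  have m: "1 \<le> m" "m \<le> n" and b: "b \<in> br m" and e': "e' \<in> exc (n - m)"
    using p by (auto simp: pe TT_def)
  have lb: "length b = m" and sb: "sum_list b = 0" using b by (auto simp: br_def)
  have le': "length e' = n - m" and se': "sum_list e' = 0" and pe': "\<And>j. ps e' j \<le> 0"
    using e' by (auto simp: exc_def)
  define c where "c = lastmax b"
  have bne: "b \<noteq> []" using lb m by auto
  have c1: "1 \<le> c" "c \<le> m" and c2: "\<And>i. ps b i \<le> ps b c"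
    and c3: "\<And>i. c < i \<Longrightarrow> i \<le> m \<Longrightarrow> ps b i < ps b c"
    using lastmax[OF bne sb] lb unfolding c_def by auto
  define x where "x = take c b"
  define y where "y = drop c b"
  have lx: "length x = c" and ly: "length y = m - c" using c1 lb by (auto simp: x_def y_def)
  have psx: "ps x k = ps b (min k c)" for k unfolding x_def by (rule ps_take)
  have psy: "ps y k = ps b (c + k) - ps b c" for k unfolding y_def by (rule ps_drop)
  have psyx: "ps (y @ x) k \<le> 0" for k
  proof (cases "k \<le> m - c")
    case True
    then show ?thesis unfolding ps_append psx psy ly using c2[of "c + k"] by simp
  next
    case False
    then have "ps b (c + k) = 0" using lb sb by simp
    then show ?thesis unfolding ps_append psx psy ly using c2[of "min (k - (m - c)) c"] by simp
  qed
  define e where "e = e' @ y @ x"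
  define t where "t = (n - m) + (m - c)"
  have pp: "psi n p = (e, t)" by (simp add: pe psi_def e_def t_def c_def x_def y_def)
  have len: "length e = n" using le' lx ly m c1 by (simp add: e_def)
  have se: "sum_list e = 0"
  proof -
    have "sum_list y + sum_list x = sum_list b" unfolding x_def y_def
      by (metis append_take_drop_id sum_list_append add.commute)
    then show ?thesis using se' sb by (simp add: e_def)
  qed
  have pse: "ps e j = ps e' j + ps (y @ x) (j - (n - m))" for j
    unfolding e_def ps_append[where xs = e' and ys = "y @ x"] le' by simp
  have pe_le: "ps e j \<le> 0" for j using pse[of j] pe'[of j] psyx[of "j - (n - m)"] by simp
  have ein: "e \<in> exc n" using len se pe_le by (simp add: exc_def)
  have tn: "t < n" using c1 m by (simp add: t_def)
  show "psi n p \<in> exc n \<times> {..<n}" using ein tn pp by simp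
  have a: "lastz e t = n - m"
  proof (rule lastz_eqI)
    show "n - m \<le> t" by (simp add: t_def)
    show "ps e (n - m) = 0" using pse[of "n - m"] le' se' by simp
    fix j assume j: "n - m < j" "j \<le> t"
    define k where "k = j - (n - m)"
    have k: "1 \<le> k" "k \<le> m - c" using j by (auto simp: k_def t_def)
    have "ps e j = ps (y @ x) k" using pse[of j] le' se' j by (simp add: k_def)
    also have "\<dots> = ps b (c + k) - ps b c" unfolding ps_append psx psy ly using k by simp
    also have "\<dots> < 0" using c3[of "c + k"] k c1 by simp
    finally show "ps e j \<noteq> 0" by simp
  qed
  have d1: "drop t e = x" using le' ly m c1 by (simp add: e_def t_def)
  have d2: "take (t - (n - m)) (drop (n - m) e) = y" using le' ly by (simp add: e_def t_def)
  have d3: "take (n - m) e = e'" using le' by (simp add: e_def)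
  have "x @ y = b" by (simp add: x_def y_def)
  then show "phi n (psi n p) = p"
    unfolding pp phi_def using a d1 d2 d3 m by (simp add: pe)
qed



lemma comb_identity:
  fixes w :: complex
  assumes w: "w \<noteq> 0" and hq: "(\<lambda>i. norm (q i * power_int w i)) summable_on UNIV"
  shows "of_nat n * infsum (W q) (exc n)
       = (\<Sum>m=1..n. infsum (W q) (br m) * infsum (W q) (exc (n - m)))"
proof -
  have sE: "(\<lambda>d. norm (W q d)) summable_on exc m" for m
    by (rule W_summable_fixed_sum[OF w hq, of _ m 0]) (auto simp: exc_def)
  have sB: "(\<lambda>d. norm (W q d)) summable_on br m" for m
    by (rule W_summable_fixed_sum[OF w hq, of _ m 0]) (auto simp: br_def)
  define S where "S = exc n \<times> {..<n}"
  define g where "g = (\<lambda>(e::int list, t::nat). W q e)"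
  define h where "h = (\<lambda>(m::nat, (b, e')). W q b * W q e')"
  have one: "(\<lambda>t. norm ((\<lambda>_. 1::complex) t)) summable_on {..<n}" by simp
  note P1 = prod_abs_summable[OF sE[of n] one]
  have gS: "g summable_on S"
    using abs_summable_summable[OF P1(1)] unfolding S_def g_def by simp
  have "of_nat n * infsum (W q) (exc n) = infsum g S"
    using P1(2) unfolding S_def g_def by (simp add: mult.commute)
  also have "\<dots> = infsum h (TT n)"
    by (rule infsum_reindex_bij_witness[of S "psi n" "phi n" "TT n" h g])
       (auto simp: S_def g_def h_def fwd bwd)
  also have "\<dots> = (\<Sum>\<^sub>\<infinity>m\<in>{1..n}. \<Sum>\<^sub>\<infinity>(b,e')\<in>br m \<times> exc (n - m). W q b * W q e')"
  proof -
    have hT: "h summable_on TT n"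
      using summable_on_reindex_bij_witness[of S "psi n" "phi n" "TT n" h g] gS
      by (auto simp: S_def g_def h_def fwd bwd)
    show ?thesis
      using infsum_Sigma'_banach[of "\<lambda>m. \<lambda>(b,e'). W q b * W q e'" "{1..n}" "\<lambda>m. br m \<times> exc (n - m)"]
        hT unfolding h_def TT_def by simp
  qed
  also have "\<dots> = (\<Sum>m=1..n. infsum (W q) (br m) * infsum (W q) (exc (n - m)))"
    using prod_abs_summable(2)[OF sB sE] by simp
  finally show ?thesis .
qed



lemma circle_power_int:
  assumes R: "R > 0"
  shows "((\<lambda>w. power_int w k) has_contour_integral (if k = -1 then 2 * of_real pi * \<i> else 0)) (circlepath 0 R)"
proof (cases "k = -1")
  case True
  have ci: "(\<lambda>w. 1 / (w - 0)) contour_integrable_on (circlepath 0 R)"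
    by (rule contour_integrable_continuous_circlepath) (use R in \<open>auto intro!: continuous_intros\<close>)
  have "((\<lambda>w. 1 / (w - 0)) has_contour_integral 2 * of_real pi * \<i>) (circlepath 0 R)"
    using has_contour_integral_integral[OF ci] contour_integral_circlepath[OF R, of 0] by simp
  then have "((\<lambda>w. power_int w (-1)) has_contour_integral 2 * of_real pi * \<i>) (circlepath 0 R)"
    by (rule has_contour_integral_eq) (use R in \<open>auto simp: power_int_minus field_simps\<close>)
  then show ?thesis using True by simp
next
  case False
  have d: "((\<lambda>w. power_int w (k+1) / of_int (k+1)) has_field_derivative power_int x k) (at x within -{0})"
    if "x \<in> -{0}" for x :: complex
  proof -
    have "((\<lambda>w. power_int w (k+1)) has_field_derivative of_int (k+1) * power_int x (k + 1 - 1) * 1) (at x within -{0})"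
      by (rule DERIV_power_int[OF DERIV_ident]) (use that in auto)
    then have "((\<lambda>w. power_int w (k+1) / of_int (k+1)) has_field_derivative (of_int (k+1) * power_int x (k + 1 - 1) * 1) / of_int (k+1)) (at x within -{0})"
      by (rule DERIV_cdivide)
    moreover have "of_int (k+1) \<noteq> (0::complex)" using False by (metis add.commute add_eq_0_iff of_int_eq_0_iff)
    ultimately show ?thesis by simp
  qed
  have "((\<lambda>w. power_int w k) has_contour_integral 0) (circlepath 0 R)"
    by (rule Cauchy_theorem_primitive[OF d]) (use R in auto)
  then show ?thesis using False by simp
qed



lemma filterlim_bounded_lists:
  assumes A: "A \<subseteq> {d::int list. length d = n}"
  shows "filterlim (\<lambda>N::nat. {d\<in>A. set d \<subseteq> {-int N..int N}}) (finite_subsets_at_top A) sequentially"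
  unfolding filterlim_finite_subsets_at_top
proof (intro allI impI, elim conjE)
  fix X assume X: "finite X" "X \<subseteq> A"
  have "finite ((\<lambda>x. nat \<bar>x\<bar>) ` (\<Union>d\<in>X. set d))" using X by auto
  then obtain N0 where N0: "\<And>x. x \<in> (\<Union>d\<in>X. set d) \<Longrightarrow> nat \<bar>x\<bar> \<le> N0"
    unfolding finite_nat_set_iff_bounded_le by blast
  show "\<forall>\<^sub>F N in sequentially. finite {d\<in>A. set d \<subseteq> {-int N..int N}} \<and>
      X \<subseteq> {d\<in>A. set d \<subseteq> {-int N..int N}} \<and> {d\<in>A. set d \<subseteq> {-int N..int N}} \<subseteq> A"
    using eventually_ge_at_top[of N0]
  proof eventually_elim
    case (elim N)
    have "finite {d\<in>A. set d \<subseteq> {-int N..int N}}"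
      by (rule finite_subset[OF _ finite_lists_length_eq[of "{-int N..int N}" n]]) (use A in auto)
    moreover have "X \<subseteq> {d\<in>A. set d \<subseteq> {-int N..int N}}"
    proof
      fix d assume d: "d \<in> X"
      have "x \<in> {-int N..int N}" if "x \<in> set d" for x
      proof -
        have "nat \<bar>x\<bar> \<le> N0" by (rule N0) (use d that in blast)
        then have "nat \<bar>x\<bar> \<le> N" using elim by simp
        then have "\<bar>x\<bar> \<le> int N" by (simp add: nat_le_iff)
        then show ?thesis by auto
      qed
      then show "d \<in> {d\<in>A. set d \<subseteq> {-int N..int N}}" using d X by auto
    qed
    ultimately show ?case by auto
  qed
qed

lemma symbol_contour:
  assumes R: "R > 0"
    and hq: "\<And>w::complex. norm w = R \<Longrightarrow> (\<lambda>i. norm (q i * power_int w i)) summable_on UNIV"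
  shows "((\<lambda>w. symbol q w ^ n / w) has_contour_integral (2 * of_real pi * \<i> * infsum (W q) (br n))) (circlepath 0 R)"
proof -
  define L where "L = {d::int list. length d = n}"
  define F where "F N = {d\<in>L. set d \<subseteq> {-int N..int N}}" for N :: nat
  define G where "G N w = (\<Sum>d\<in>F N. W q d * power_int w (sum_list d - 1))" for N w
  define l where "l w = symbol q w ^ n / w" for w
  define ar where "ar d = norm (W q d) * R powi (sum_list d)" for d
  have finF: "finite (F N)" for N
    by (rule finite_subset[OF _ finite_lists_length_eq[of "{-int N..int N}" n]]) (auto simp: F_def L_def)
  have FL: "F N \<subseteq> L" for N by (auto simp: F_def)
  have w0: "w \<noteq> 0" if "norm w = R" for w :: complex using that R by auto
  have LP: "(\<lambda>d. norm (prod_list (map (\<lambda>i. q i * power_int w i) d))) summable_on L \<and>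
      (\<Sum>\<^sub>\<infinity>d\<in>L. prod_list (map (\<lambda>i. q i * power_int w i) d)) = (symbol q w) ^ n"
    if "norm w = R" for w
    using lists_prod_abs_summable[OF hq[OF that], of n] unfolding L_def symbol_def by simp
  have ar_eq: "norm (W q d * power_int w (sum_list d)) = ar d" if "norm w = R" for w d
    using that by (simp add: ar_def norm_mult norm_power_int)
  have expand: "symbol q w ^ n = (\<Sum>\<^sub>\<infinity>d\<in>L. W q d * power_int w (sum_list d))"
    and summ_w: "(\<lambda>d. norm (W q d * power_int w (sum_list d))) summable_on L"
    if "norm w = R" for w
    using LP[OF that] by (simp_all add: prod_list_power_int[OF w0[OF that]])
  have ar_summ: "ar summable_on L"
  proof -
    have "norm (complex_of_real R) = R" using R by simp
    from summ_w[OF this] show ?thesis by (simp add: ar_eq[OF \<open>norm (complex_of_real R) = R\<close>])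
  qed
  have tail: "(\<lambda>N. infsum ar L - sum ar (F N)) \<longlonglongrightarrow> 0"
  proof -
    have "(sum ar \<longlongrightarrow> infsum ar L) (finite_subsets_at_top L)"
      using has_sum_infsum[OF ar_summ] unfolding has_sum_def .
    then have "(\<lambda>N. sum ar (F N)) \<longlonglongrightarrow> infsum ar L"
      by (rule filterlim_compose) (unfold F_def, rule filterlim_bounded_lists[of L n], simp add: L_def)
    then have "(\<lambda>N. infsum ar L - sum ar (F N)) \<longlonglongrightarrow> infsum ar L - infsum ar L"
      by (intro tendsto_intros)
    then show ?thesis by simp
  qed
  have bound: "norm (l w - G N w) \<le> (infsum ar L - sum ar (F N)) / R" if w: "norm w = R" for w N
  proof -
    define f where "f d = W q d * power_int w (sum_list d)" for d
    have fs: "f summable_on L" using Infinite_Sum.abs_summable_summable[OF summ_w[OF w]] unfolding f_def by simp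
    have fsD: "(\<lambda>d. norm (f d)) summable_on (L - F N)"
      using summable_on_subset_banach[OF summ_w[OF w], of "L - F N"] unfolding f_def by auto
    have Gw: "G N w = sum f (F N) / w"
      unfolding G_def f_def sum_divide_distrib
      by (intro sum.cong refl) (simp add: power_int_diff w0[OF w])
    have "l w - G N w = (infsum f L - sum f (F N)) / w"
      unfolding l_def Gw expand[OF w] f_def by (simp add: diff_divide_distrib)
    also have "infsum f L - sum f (F N) = infsum f (L - F N)"
      using infsum_Diff[OF fs _ FL] finF by simp
    finally have "norm (l w - G N w) = norm (infsum f (L - F N)) / R"
      using w by (simp add: norm_divide)
    also have "norm (infsum f (L - F N)) \<le> infsum (\<lambda>d. norm (f d)) (L - F N)"
      by (rule norm_infsum_bound[OF fsD])
    also have "infsum (\<lambda>d. norm (f d)) (L - F N) = infsum ar (L - F N)"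
      by (intro infsum_cong) (simp add: f_def ar_eq[OF w])
    also have "\<dots> = infsum ar L - sum ar (F N)"
      using infsum_Diff[OF ar_summ _ FL] finF by simp
    finally show ?thesis using R by (simp add: divide_right_mono)
  qed
  have ul: "uniform_limit (sphere 0 R) G l sequentially"
    unfolding uniform_limit_iff
  proof (intro allI impI)
    fix e :: real assume e: "e > 0"
    have "\<forall>\<^sub>F N in sequentially. dist (infsum ar L - sum ar (F N)) 0 < e * R"
      using tail e R by (auto simp: tendsto_iff)
    then show "\<forall>\<^sub>F N in sequentially. \<forall>w\<in>sphere 0 R. dist (G N w) (l w) < e"
    proof eventually_elim
      case (elim N)
      show ?case
      proof
        fix w :: complex assume "w \<in> sphere 0 R"
        then have w: "norm w = R" by simp
        have "dist (G N w) (l w) = norm (l w - G N w)" by (simp add: dist_norm norm_minus_commute)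
        also have "\<dots> \<le> (infsum ar L - sum ar (F N)) / R" by (rule bound[OF w])
        also have "\<dots> < e" using elim R by (simp add: divide_less_eq)
        finally show "dist (G N w) (l w) < e" .
      qed
    qed
  qed
  have Gint: "(G N has_contour_integral 2 * of_real pi * \<i> * (\<Sum>d\<in>{d\<in>F N. sum_list d = 0}. W q d)) (circlepath 0 R)" for N
  proof -
    have "((\<lambda>w. \<Sum>d\<in>F N. W q d * power_int w (sum_list d - 1)) has_contour_integral
        (\<Sum>d\<in>F N. W q d * (if sum_list d - 1 = -1 then 2 * of_real pi * \<i> else 0))) (circlepath 0 R)"
      by (rule has_contour_integral_sum[OF finF]) (intro has_contour_integral_lmul circle_power_int R)
    moreover have "(\<Sum>d\<in>F N. W q d * (if sum_list d - 1 = -1 then 2 * of_real pi * \<i> else 0))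
        = 2 * of_real pi * \<i> * (\<Sum>d\<in>{d\<in>F N. sum_list d = 0}. W q d)"
      by (simp add: sum.inter_filter[OF finF] sum_distrib_left mult_ac if_distrib cong: if_cong)
    ultimately show ?thesis unfolding G_def[abs_def] by simp
  qed
  have lim1: "(\<lambda>N. contour_integral (circlepath 0 R) (G N)) \<longlonglongrightarrow> contour_integral (circlepath 0 R) l"
    and lint: "l contour_integrable_on circlepath 0 R"
  proof -
    have ev: "\<forall>\<^sub>F N in sequentially. G N contour_integrable_on circlepath 0 R"
      using Gint by (auto simp: contour_integrable_on_def intro!: always_eventually)
    show "(\<lambda>N. contour_integral (circlepath 0 R) (G N)) \<longlonglongrightarrow> contour_integral (circlepath 0 R) l"
      "l contour_integrable_on circlepath 0 R"
      using contour_integral_uniform_limit_circlepath[OF ev ul _ R] by auto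
  qed
  have "(\<lambda>N. contour_integral (circlepath 0 R) (G N)) = (\<lambda>N. 2 * of_real pi * \<i> * (\<Sum>d\<in>{d\<in>F N. sum_list d = 0}. W q d))"
    using Gint contour_integral_unique by blast
  moreover have "(\<lambda>N. 2 * of_real pi * \<i> * (\<Sum>d\<in>{d\<in>F N. sum_list d = 0}. W q d)) \<longlonglongrightarrow> 2 * of_real pi * \<i> * infsum (W q) (br n)"
  proof -
    have "norm (complex_of_real R) = R" using R by simp
    have Ws: "W q summable_on br n"
      using Infinite_Sum.abs_summable_summable[OF W_summable_fixed_sum[OF w0[OF \<open>norm (complex_of_real R) = R\<close>] hq[OF \<open>norm (complex_of_real R) = R\<close>], of "br n" n 0]]
      by (auto simp: br_def)
    have "(sum (W q) \<longlongrightarrow> infsum (W q) (br n)) (finite_subsets_at_top (br n))"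
      using has_sum_infsum[OF Ws] unfolding has_sum_def .
    then have "(\<lambda>N. sum (W q) {d\<in>br n. set d \<subseteq> {-int N..int N}}) \<longlonglongrightarrow> infsum (W q) (br n)"
      by (rule filterlim_compose) (rule filterlim_bounded_lists[of "br n" n], auto simp: br_def)
    moreover have "{d\<in>br n. set d \<subseteq> {-int N..int N}} = {d\<in>F N. sum_list d = 0}" for N
      by (auto simp: br_def F_def L_def)
    ultimately show ?thesis by (intro tendsto_intros) simp
  qed
  ultimately have "contour_integral (circlepath 0 R) l = 2 * of_real pi * \<i> * infsum (W q) (br n)"
    using lim1 LIMSEQ_unique by metis
  then show ?thesis
    using has_contour_integral_integral[OF lint] unfolding l_def by simp
qed



lemma fps_ode_unique:
  fixes X Y G :: "complex fps"
  assumes X: "fps_deriv X = X * G" and Y: "fps_deriv Y = Y * G" and X0: "X $ 0 = Y $ 0"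
  shows "X = Y"
proof -
  have "X $ n = Y $ n" for n
  proof (induction n rule: less_induct)
    case (less n)
    show ?case
    proof (cases n)
      case 0 then show ?thesis using X0 by simp
    next
      case (Suc m)
      have "of_nat (m + 1) * X $ (m + 1) = (X * G) $ m"
        using arg_cong[OF X, of "\<lambda>F. F $ m"] by simp
      also have "\<dots> = (\<Sum>i=0..m. X $ i * G $ (m - i))" by (rule fps_mult_nth)
      also have "\<dots> = (\<Sum>i=0..m. Y $ i * G $ (m - i))"
        using less Suc by (intro sum.cong refl) auto
      also have "\<dots> = (Y * G) $ m" by (rule fps_mult_nth[symmetric])
      also have "\<dots> = of_nat (m + 1) * Y $ (m + 1)"
        using arg_cong[OF Y, of "\<lambda>F. F $ m"] by simp
      finally show ?thesis using Suc by (simp del: of_nat_Suc)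
    qed
  qed
  then show ?thesis by (simp add: fps_eq_iff)
qed

lemma exc_0: "exc 0 = {[]}" by (auto simp: exc_def)

lemma main_result:
  fixes q :: "int \<Rightarrow> complex" and R :: real
  assumes R: "R > 0"
    and hq: "\<And>w::complex. norm w = R \<Longrightarrow> (\<lambda>i. norm (q i * power_int w i)) summable_on UNIV"
  shows "Abs_fps (\<lambda>k. toeplitz_pow q k 0 0) = fps_exp 1 oo fps_circle_avg R (log_part q)"
proof -
  have nR: "norm (complex_of_real R) = R" using R by simp
  have w0: "complex_of_real R \<noteq> 0" using R by simp
  note hR = hq[OF nR]
  define Ef where "Ef k = infsum (W q) (exc k)" for k
  define Bf where "Bf k = infsum (W q) (br k)" for k
  define E where "E = Abs_fps Ef"
  define Lc where "Lc = fps_circle_avg R (log_part q)"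
  have E_eq: "Abs_fps (\<lambda>k. toeplitz_pow q k 0 0) = E"
    unfolding E_def Ef_def using toeplitz_pow_paths[OF w0 hR] paths_00 by simp
  have Lc_nth: "Lc $ n = (if n = 0 then 0 else Bf n / of_nat n)" for n
  proof (cases "n = 0")
    case True
    then show ?thesis by (simp add: Lc_def fps_circle_avg_def log_part_def)
  next
    case False
    have "((\<lambda>w. symbol q w ^ n / w / of_nat n) has_contour_integral
        (2 * of_real pi * \<i> * Bf n / of_nat n)) (circlepath 0 R)"
      unfolding Bf_def by (rule has_contour_integral_div[OF symbol_contour[OF R hq]])
    then have "contour_integral (circlepath 0 R) (\<lambda>w. fps_nth (log_part q w) n / w)
        = 2 * of_real pi * \<i> * Bf n / of_nat n"
      using False by (intro contour_integral_unique) (simp add: log_part_def field_simps)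
    then show ?thesis using False by (simp add: Lc_def fps_circle_avg_def)
  qed
  have L0: "Lc $ 0 = 0" by (simp add: Lc_nth)
  have dF: "fps_deriv (fps_exp 1 oo Lc) = (fps_exp 1 oo Lc) * fps_deriv Lc"
    using fps_compose_deriv[OF L0, of "fps_exp (1::complex)"] by simp
  have dE: "fps_deriv E = E * fps_deriv Lc"
  proof (rule fps_ext)
    fix m
    have "fps_deriv E $ m = of_nat (m + 1) * Ef (m + 1)" by (simp add: E_def)
    also have "\<dots> = (\<Sum>k=1..m+1. Bf k * Ef (m + 1 - k))"
      unfolding Ef_def Bf_def by (rule comb_identity[OF w0 hR])
    also have "\<dots> = (\<Sum>i=0..m. Bf (i + 1) * Ef (m - i))"
    proof -
      have "{1..m+1} = {Suc 0..Suc m}" by simp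
      then show ?thesis by (simp only: sum.shift_bounds_cl_Suc_ivl) simp
    qed
    also have "\<dots> = (\<Sum>i=0..m. Bf (m - i + 1) * Ef i)"
      by (subst sum.atLeastAtMost_rev) (intro sum.cong refl, simp)
    also have "\<dots> = (\<Sum>i=0..m. E $ i * fps_deriv Lc $ (m - i))"
      by (intro sum.cong refl) (simp add: E_def Lc_nth del: of_nat_Suc)
    also have "\<dots> = (E * fps_deriv Lc) $ m" by (rule fps_mult_nth[symmetric])
    finally show "fps_deriv E $ m = (E * fps_deriv Lc) $ m" .
  qed
  have "E = fps_exp 1 oo Lc"
    by (rule fps_ode_unique[OF dE dF]) (simp add: E_def Ef_def exc_0)
  then show ?thesis using E_eq Lc_def by simp
qed


theorem lemma4p1:
  fixes q :: "int \<Rightarrow> complex" and \<epsilon> :: real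
  assumes "\<epsilon> > 0"
    and "\<And>w::complex. 1 < norm w \<Longrightarrow> norm w < 1 + \<epsilon> \<Longrightarrow> ((\<lambda>i. norm (q i * power_int w i)) summable_on UNIV)"
  shows "fps_X * Abs_fps (\<lambda>k. toeplitz_pow q k 0 0)
         = fps_X * (fps_exp 1 oo fps_circle_avg (1 + \<epsilon> / 2) (log_part q))"
proof -
  have "Abs_fps (\<lambda>k. toeplitz_pow q k 0 0) = fps_exp 1 oo fps_circle_avg (1 + \<epsilon> / 2) (log_part q)"
  proof (rule main_result)
    show "1 + \<epsilon> / 2 > 0" using assms(1) by simp
    fix w :: complex assume "norm w = 1 + \<epsilon> / 2"
    then show "(\<lambda>i. norm (q i * power_int w i)) summable_on UNIV"
      using assms by simp
  qed
  then show ?thesis by simp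
qed

end
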